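(* Let $k_{ON},k_{OFF},k_I,\alpha_{p_1},\alpha_{p_2},\gamma_{p_1},\gamma_{m_2},\alpha_{m_2,I},\beta_{m_2,A},T_c>0$, $v_b>1$, $n\ge 1$, and set $a_1=k_{ON}$, $a_3=k_{ON}+k_{OFF}$, $a_4=k_I$, $a_5=\alpha_{p_1}$, $a_6=\gamma_{p_1}$, $a_7=\alpha_{m_2,I}$, $a_8=\gamma_{m_2}+\alpha_{p_1}+\alpha_{p_2}$, $a_9=\beta_{m_2,A}/v_b$, $a_{10}=v_b/T_c^n$, $a_{11}=1/T_c^n$. Consider the quasi-steady-state system \[ \begin{aligned} x' &= a_1 + (a_4-a_1)y - \Big(a_3 + a_9\frac{1+a_{10}v^n}{1+a_{11}v^n}\Big)x,\\ y' &= a_9\frac{1+a_{10}v^n}{1+a_{11}v^n}x - a_4 y,\\ v' &= a_5\frac{a_7}{a_8}x - a_6 v. \end{aligned} \] Then its positive steady state $(x^*,y^*,v^* )$ (all components positive) is locally asymptotically stable.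
   Context: Here $x=\mathrm{LTR}_I$, $y=\mathrm{LTR}_A$, $v=\mathrm{Tat}$ in a model of HIV-1 transcription (with $\mathrm{LTR}_R=1-x-y$), obtained by replacing $\mathrm{env}_I$ with its quasi-steady-state value $\frac{a_7}{a_8}x$. *)

theory Defs
  imports "HOL-Analysis.Analysis"
begin

definition ode_solution_on :: "('a::real_normed_vector \<Rightarrow> 'a) \<Rightarrow> (real \<Rightarrow> 'a) \<Rightarrow> real set \<Rightarrow> bool" where
  "ode_solution_on f \<phi> I \<longleftrightarrow> (\<forall>t\<in>I. (\<phi> has_vector_derivative f (\<phi> t)) (at t within I))"

definition lyapunov_stable :: "('a::real_normed_vector \<Rightarrow> 'a) \<Rightarrow> 'a \<Rightarrow> bool" where
  "lyapunov_stable f p \<longleftrightarrow>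
     (\<forall>\<epsilon>>0. \<exists>\<delta>>0. \<forall>\<phi> T. ode_solution_on f \<phi> {0..<T} \<and> 0 < T \<and> dist (\<phi> 0) p < \<delta>
          \<longrightarrow> (\<forall>t\<in>{0..<T}. dist (\<phi> t) p < \<epsilon>))"

definition locally_attractive :: "('a::real_normed_vector \<Rightarrow> 'a) \<Rightarrow> 'a \<Rightarrow> bool" where
  "locally_attractive f p \<longleftrightarrow>
     (\<exists>\<eta>>0. \<forall>z0. dist z0 p < \<eta> \<longrightarrow>
        (\<exists>\<phi>. ode_solution_on f \<phi> {0..} \<and> \<phi> 0 = z0) \<and>
        (\<forall>\<phi>. ode_solution_on f \<phi> {0..} \<and> \<phi> 0 = z0 \<longrightarrow> (\<phi> \<longlongrightarrow> p) at_top))"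

definition locally_asymptotically_stable :: "('a::real_normed_vector \<Rightarrow> 'a) \<Rightarrow> 'a \<Rightarrow> bool" where
  "locally_asymptotically_stable f p \<longleftrightarrow>
     f p = 0 \<and> lyapunov_stable f p \<and> locally_attractive f p"

definition hiv_field ::
  "real \<Rightarrow> real \<Rightarrow> real \<Rightarrow> real \<Rightarrow> real \<Rightarrow> real \<Rightarrow> real \<Rightarrow> real \<Rightarrow> real \<Rightarrow> real \<Rightarrow> nat
   \<Rightarrow> real \<times> real \<times> real \<Rightarrow> real \<times> real \<times> real" where
  "hiv_field a1 a3 a4 a5 a6 a7 a8 a9 a10 a11 n =
     (\<lambda>(x, y, v).
        let h = a9 * (1 + a10 * v ^ n) / (1 + a11 * v ^ n) in
        (a1 + (a4 - a1) * y - (a3 + h) * x,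
         h * x - a4 * y,
         a5 * (a7 / a8) * x - a6 * v))"

end

theory Submission
  imports Defs
begin


definition picF :: "('a::euclidean_space \<Rightarrow> 'a) \<Rightarrow> 'a \<Rightarrow> (real \<Rightarrow> 'a) \<Rightarrow> real \<Rightarrow> 'a" where
  "picF g z0 \<psi> t = z0 + integral {0..t} (\<lambda>s. g (\<psi> s))"

definition picP :: "('a::euclidean_space \<Rightarrow> 'a) \<Rightarrow> 'a \<Rightarrow> real \<Rightarrow> (real \<Rightarrow>\<^sub>C 'a) \<Rightarrow> (real \<Rightarrow>\<^sub>C 'a)" where
  "picP g z0 N \<psi> = (SOME h. (\<forall>t\<in>{0..N}. apply_bcontfun h t = picF g z0 (apply_bcontfun \<psi>) t)
      \<and> (\<forall>t. apply_bcontfun h t = picF g z0 (apply_bcontfun \<psi>) (clamp 0 N t)))"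

lemma picF_deriv:
  fixes g :: "'a::euclidean_space \<Rightarrow> 'a"
  assumes "continuous_on UNIV g" "continuous_on {0..N} \<psi>" "t \<in> {0..N}"
  shows "(picF g z0 \<psi> has_vector_derivative g (\<psi> t)) (at t within {0..N})"
proof -
  have c: "continuous_on {0..N} (\<lambda>s. g (\<psi> s))"
    using assms by (auto intro: continuous_on_compose2[of UNIV g])
  show ?thesis unfolding picF_def
    using integral_has_vector_derivative[OF c assms(3)]
    by (auto intro!: derivative_eq_intros)
qed

lemma picF_cont:
  fixes g :: "'a::euclidean_space \<Rightarrow> 'a"
  assumes "continuous_on UNIV g" "continuous_on {0..N} \<psi>"
  shows "continuous_on {0..N} (picF g z0 \<psi>)"
  unfolding continuous_on_eq_continuous_within
  using picF_deriv[OF assms] has_vector_derivative_continuous by blast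

lemma clamp_real: "0 \<le> N \<Longrightarrow> clamp 0 N (t::real) \<in> {0..N}"
  using clamp_in_interval[of 0 N t] by (simp add: cbox_interval)

lemma clamp_real_id: "t \<in> {0..N} \<Longrightarrow> clamp 0 N (t::real) = t"
  using clamp_cancel_cbox[of t 0 N] by (simp add: cbox_interval)

lemma picP_props:
  fixes g :: "'a::euclidean_space \<Rightarrow> 'a"
  assumes "continuous_on UNIV g" "0 \<le> N"
  shows "\<forall>t\<in>{0..N}. apply_bcontfun (picP g z0 N \<psi>) t = picF g z0 (apply_bcontfun \<psi>) t"
    and "\<forall>t. apply_bcontfun (picP g z0 N \<psi>) t = picF g z0 (apply_bcontfun \<psi>) (clamp 0 N t)"
proof -
  have "continuous_on (cbox 0 N) (picF g z0 (apply_bcontfun \<psi>))"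
    using picF_cont[OF assms(1), of N "apply_bcontfun \<psi>"] by (simp add: cbox_interval)
  then obtain h :: "real \<Rightarrow>\<^sub>C 'a" where h: "\<And>x. x \<in> cbox 0 N \<Longrightarrow> h x = picF g z0 (apply_bcontfun \<psi>) x"
     "\<And>x. h x = picF g z0 (apply_bcontfun \<psi>) (clamp 0 N x)"
    by (rule continuous_on_cbox_bcontfunE) blast
  have ex: "\<exists>h. (\<forall>t\<in>{0..N}. apply_bcontfun h t = picF g z0 (apply_bcontfun \<psi>) t)
      \<and> (\<forall>t. apply_bcontfun h t = picF g z0 (apply_bcontfun \<psi>) (clamp 0 N t))"
  proof (intro exI[of _ h] conjI ballI allI)
    show "\<And>t. t \<in> {0..N} \<Longrightarrow> apply_bcontfun h t = picF g z0 (apply_bcontfun \<psi>) t"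
      using h(1) by (simp add: cbox_interval)
  qed (rule h(2))
  show "\<forall>t\<in>{0..N}. apply_bcontfun (picP g z0 N \<psi>) t = picF g z0 (apply_bcontfun \<psi>) t"
    and "\<forall>t. apply_bcontfun (picP g z0 N \<psi>) t = picF g z0 (apply_bcontfun \<psi>) (clamp 0 N t)"
    using someI_ex[OF ex] unfolding picP_def by auto
qed

lemma lip_cont:
  fixes g :: "'a::euclidean_space \<Rightarrow> 'a"
  assumes "\<forall>a b. norm (g a - g b) \<le> L * norm (a - b)" "0 \<le> L"
  shows "continuous_on S g"
proof -
  have "L-lipschitz_on S g"
    using assms by (intro lipschitz_onI) (auto simp: dist_norm)
  then show ?thesis by (rule lipschitz_on_continuous_on)
qed

lemma power_integral:
  fixes L d t :: real and k :: nat
  assumes "0 \<le> t"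
  shows "integral {0..t} (\<lambda>s. L * ((L * s)^k / fact k * d)) = (L * t)^(Suc k) / fact (Suc k) * d"
proof -
  have "((\<lambda>s. L * ((L * s)^k / fact k * d)) has_integral
      ((\<lambda>s. (L * s)^(Suc k) * (d / fact (Suc k))) t - (\<lambda>s. (L * s)^(Suc k) * (d / fact (Suc k))) 0)) {0..t}"
  proof (rule fundamental_theorem_of_calculus[OF assms])
    fix x assume "x \<in> {0..t}"
    have d1: "((\<lambda>s. L * s) has_real_derivative L) (at x within {0..t})"
      by (auto intro!: derivative_eq_intros)
    have d2: "((\<lambda>s. (L * s)^(Suc k) * (d / fact (Suc k))) has_real_derivative
        (of_nat (Suc k) * (L * (L * x) ^ (Suc k - Suc 0))) * (d / fact (Suc k))) (at x within {0..t})"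
      by (rule DERIV_cmult_right[OF DERIV_power[OF d1]])
    have E: "(of_nat (Suc k) * (L * (L * x) ^ (Suc k - Suc 0))) * (d / fact (Suc k)) = L * ((L * x)^k / fact k * d)"
      by (simp add: fact_Suc field_simps del: of_nat_Suc)
    show "((\<lambda>s. (L * s)^(Suc k) * (d / fact (Suc k))) has_vector_derivative L * ((L * x)^k / fact k * d)) (at x within {0..t})"
      unfolding has_real_derivative_iff_has_vector_derivative[symmetric]
      using d2 unfolding E .
  qed
  then have "integral {0..t} (\<lambda>s. L * ((L * s)^k / fact k * d)) =
      (\<lambda>s. (L * s)^(Suc k) * (d / fact (Suc k))) t - (\<lambda>s. (L * s)^(Suc k) * (d / fact (Suc k))) 0"
    by (rule integral_unique)
  also have "\<dots> = (L * t)^(Suc k) / fact (Suc k) * d" by simp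
  finally show ?thesis .
qed

lemma picP_iter_bound:
  fixes g :: "'a::euclidean_space \<Rightarrow> 'a"
  assumes lip: "\<forall>a b. norm (g a - g b) \<le> L * norm (a - b)" and L: "0 \<le> L" and N: "0 \<le> N"
  shows "\<forall>t\<in>{0..N}. norm (((picP g z0 N)^^k) \<phi> t - ((picP g z0 N)^^k) \<psi> t) \<le> (L * t)^k / fact k * dist \<phi> \<psi>"
proof (induction k)
  case 0
  then show ?case using dist_bounded[of \<phi> _ \<psi>] by (simp add: dist_norm)
next
  case (Suc k)
  have gc: "continuous_on UNIV g" using lip_cont[OF lip L] .
  define A where "A = ((picP g z0 N)^^k) \<phi>"
  define B where "B = ((picP g z0 N)^^k) \<psi>"
  show ?case
  proof
    fix t assume t: "t \<in> {0..N}"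
    have cA: "continuous_on {0..t} (\<lambda>s. g (apply_bcontfun A s))"
      by (auto intro: continuous_on_compose2[OF gc])
    have cB: "continuous_on {0..t} (\<lambda>s. g (apply_bcontfun B s))"
      by (auto intro: continuous_on_compose2[OF gc])
    have "((picP g z0 N)^^Suc k) \<phi> t - ((picP g z0 N)^^Suc k) \<psi> t
        = picF g z0 (apply_bcontfun A) t - picF g z0 (apply_bcontfun B) t"
      using picP_props(1)[OF gc N] t by (simp add: A_def B_def)
    also have "\<dots> = integral {0..t} (\<lambda>s. g (A s) - g (B s))"
      unfolding picF_def
      by (simp add: integral_diff integrable_continuous_real[OF cA] integrable_continuous_real[OF cB])
    finally have eq: "((picP g z0 N)^^Suc k) \<phi> t - ((picP g z0 N)^^Suc k) \<psi> t
        = integral {0..t} (\<lambda>s. g (A s) - g (B s))" .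
    have "norm (integral {0..t} (\<lambda>s. g (A s) - g (B s))) \<le> integral {0..t} (\<lambda>s. L * ((L * s)^k / fact k * dist \<phi> \<psi>))"
    proof (rule integral_norm_bound_integral)
      show "(\<lambda>s. g (A s) - g (B s)) integrable_on {0..t}"
        by (intro integrable_continuous_real continuous_on_diff cA cB)
      show "(\<lambda>s. L * ((L * s)^k / fact k * dist \<phi> \<psi>)) integrable_on {0..t}"
        by (intro integrable_continuous_real continuous_intros) auto
      fix s assume s: "s \<in> {0..t}"
      have "norm (g (A s) - g (B s)) \<le> L * norm (A s - B s)" using lip by blast
      also have "\<dots> \<le> L * ((L * s)^k / fact k * dist \<phi> \<psi>)"
        using Suc.IH s t L by (intro mult_left_mono) (auto simp: A_def B_def)
      finally show "norm (g (A s) - g (B s)) \<le> L * ((L * s)^k / fact k * dist \<phi> \<psi>)" .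
    qed
    also have "\<dots> = (L * t)^(Suc k) / fact (Suc k) * dist \<phi> \<psi>"
      using t by (intro power_integral) auto
    finally show "norm (((picP g z0 N)^^Suc k) \<phi> t - ((picP g z0 N)^^Suc k) \<psi> t) \<le> (L * t)^(Suc k) / fact (Suc k) * dist \<phi> \<psi>"
      by (simp only: eq)
  qed
qed

lemma picP_iter_dist:
  fixes g :: "'a::euclidean_space \<Rightarrow> 'a"
  assumes lip: "\<forall>a b. norm (g a - g b) \<le> L * norm (a - b)" and L: "0 \<le> L" and N: "0 \<le> N"
  shows "dist (((picP g z0 N)^^k) \<phi>) (((picP g z0 N)^^k) \<psi>) \<le> (L * N)^k / fact k * dist \<phi> \<psi>"
proof (rule dist_bound)
  fix t
  have gc: "continuous_on UNIV g" using lip_cont[OF lip L] .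
  show "dist (((picP g z0 N)^^k) \<phi> t) (((picP g z0 N)^^k) \<psi> t) \<le> (L * N)^k / fact k * dist \<phi> \<psi>"
  proof (cases k)
    case 0
    then show ?thesis using dist_bounded[of \<phi> t \<psi>] by simp
  next
    case (Suc j)
    define c where "c = clamp 0 N t"
    have c: "c \<in> {0..N}" using clamp_real[OF N] c_def by auto
    have eq: "((picP g z0 N)^^k) w t = ((picP g z0 N)^^k) w c" for w
    proof -
      have "((picP g z0 N)^^k) w t = picP g z0 N (((picP g z0 N)^^j) w) t" using Suc by simp
      also have "\<dots> = picF g z0 (((picP g z0 N)^^j) w) c"
        using picP_props(2)[OF gc N] c_def by simp
      also have "\<dots> = picP g z0 N (((picP g z0 N)^^j) w) c"
        using picP_props(1)[OF gc N] c by simp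
      also have "\<dots> = ((picP g z0 N)^^k) w c" using Suc by simp
      finally show ?thesis .
    qed
    have "dist (((picP g z0 N)^^k) \<phi> t) (((picP g z0 N)^^k) \<psi> t)
        = norm (((picP g z0 N)^^k) \<phi> c - ((picP g z0 N)^^k) \<psi> c)"
      by (simp add: eq dist_norm)
    also have "\<dots> \<le> (L * c)^k / fact k * dist \<phi> \<psi>"
      using picP_iter_bound[OF lip L N] c by blast
    also have "\<dots> \<le> (L * N)^k / fact k * dist \<phi> \<psi>"
      using c L by (intro mult_right_mono divide_right_mono power_mono mult_left_mono) auto
    finally show ?thesis .
  qed
qed

lemma exists_small_fact:
  fixes x :: real
  shows "\<exists>k. x^k / fact k < 1"
proof -
  have "summable (\<lambda>n. x^n /\<^sub>R fact n)" using exp_converges by (rule sums_summable)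
  then have "(\<lambda>n. x^n /\<^sub>R fact n) \<longlonglongrightarrow> 0" by (rule summable_LIMSEQ_zero)
  then have "\<forall>\<^sub>F n in sequentially. x^n /\<^sub>R fact n < 1"
    by (rule order_tendstoD) simp
  then obtain k where "x^k /\<^sub>R fact k < 1" unfolding eventually_sequentially by blast
  then show ?thesis by (auto simp: divide_inverse_commute)
qed

lemma picP_unique_fix:
  fixes g :: "'a::euclidean_space \<Rightarrow> 'a"
  assumes lip: "\<forall>a b. norm (g a - g b) \<le> L * norm (a - b)" and L: "0 \<le> L" and N: "0 \<le> N"
  shows "\<exists>!h. picP g z0 N h = h"
proof -
  obtain k where k: "(L * N)^k / fact k < 1" using exists_small_fact by blast
  have c0: "0 \<le> (L * N)^k / fact k" using L N by simp
  have "\<exists>!x. ((picP g z0 N)^^k) x = x"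
    by (rule banach_fix_type[OF c0 k]) (use picP_iter_dist[OF lip L N] in blast)
  then obtain x where x: "((picP g z0 N)^^k) x = x" and u: "\<And>y. ((picP g z0 N)^^k) y = y \<Longrightarrow> y = x"
    by blast
  have "((picP g z0 N)^^k) (picP g z0 N x) = picP g z0 N x"
    using funpow_swap1[of "picP g z0 N" k x] x by simp
  then have fx: "picP g z0 N x = x" using u by blast
  have "y = x" if "picP g z0 N y = y" for y
  proof -
    have "((picP g z0 N)^^n) y = y" for n by (induction n) (simp_all add: that)
    then show ?thesis using u by blast
  qed
  then show ?thesis using fx by blast
qed

definition picSol :: "('a::euclidean_space \<Rightarrow> 'a) \<Rightarrow> 'a \<Rightarrow> real \<Rightarrow> (real \<Rightarrow>\<^sub>C 'a)" where
  "picSol g z0 N = (THE h. picP g z0 N h = h)"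

lemma picSol_eq:
  fixes g :: "'a::euclidean_space \<Rightarrow> 'a"
  assumes lip: "\<forall>a b. norm (g a - g b) \<le> L * norm (a - b)" and L: "0 \<le> L" and N: "0 \<le> N"
    and t: "t \<in> {0..N}"
  shows "apply_bcontfun (picSol g z0 N) t = picF g z0 (apply_bcontfun (picSol g z0 N)) t"
proof -
  have gc: "continuous_on UNIV g" using lip_cont[OF lip L] .
  have fx: "picP g z0 N (picSol g z0 N) = picSol g z0 N"
    unfolding picSol_def using theI'[OF picP_unique_fix[OF lip L N]] .
  have "apply_bcontfun (picP g z0 N (picSol g z0 N)) t = picF g z0 (apply_bcontfun (picSol g z0 N)) t"
    using picP_props(1)[OF gc N] t by blast
  then show ?thesis unfolding fx .
qed

lemma picSol_consist:
  fixes g :: "'a::euclidean_space \<Rightarrow> 'a"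
  assumes lip: "\<forall>a b. norm (g a - g b) \<le> L * norm (a - b)" and L: "0 \<le> L" and N: "0 \<le> N"
    and NM: "N \<le> M" and t: "t \<in> {0..N}"
  shows "apply_bcontfun (picSol g z0 N) t = apply_bcontfun (picSol g z0 M) t"
proof -
  have gc: "continuous_on UNIV g" using lip_cont[OF lip L] .
  have M: "0 \<le> M" using N NM by simp
  have "continuous_on (cbox 0 N) (apply_bcontfun (picSol g z0 M))" by simp
  then obtain h :: "real \<Rightarrow>\<^sub>C 'a" where h: "\<And>x. x \<in> cbox 0 N \<Longrightarrow> h x = picSol g z0 M x"
     "\<And>x. h x = picSol g z0 M (clamp 0 N x)"
    by (rule continuous_on_cbox_bcontfunE) blast
  have "picP g z0 N h = h"
  proof (rule bcontfun_eqI)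
    fix x
    define c where "c = clamp 0 N x"
    have c: "c \<in> {0..N}" using clamp_real[OF N] c_def by auto
    have "picP g z0 N h x = picF g z0 (apply_bcontfun h) c"
      using picP_props(2)[OF gc N] c_def by simp
    also have "\<dots> = picF g z0 (apply_bcontfun (picSol g z0 M)) c"
      unfolding picF_def
      by (rule arg_cong[where f="\<lambda>u. z0 + u"], rule integral_cong) (use c h(1) in \<open>auto simp: cbox_interval\<close>)
    also have "\<dots> = picSol g z0 M c"
      using picSol_eq[OF lip L M, of c] c NM by simp
    also have "\<dots> = h x" using h(2) c_def by simp
    finally show "picP g z0 N h x = h x" .
  qed
  then have "h = picSol g z0 N"
    unfolding picSol_def by (rule the1_equality[OF picP_unique_fix[OF lip L N], symmetric])
  then show ?thesis using h(1) t by (auto simp: cbox_interval)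
qed

lemma global_existence:
  fixes g :: "'a::euclidean_space \<Rightarrow> 'a"
  assumes lip: "\<forall>a b. norm (g a - g b) \<le> L * norm (a - b)" and L: "0 \<le> L"
  shows "\<exists>\<phi>. ode_solution_on g \<phi> {0..} \<and> \<phi> 0 = z0"
proof -
  have gc: "continuous_on UNIV g" using lip_cont[OF lip L] .
  define \<phi> where "\<phi> t = apply_bcontfun (picSol g z0 (\<bar>t\<bar> + 1)) t" for t
  have cons: "apply_bcontfun (picSol g z0 N) s = apply_bcontfun (picSol g z0 M) s"
    if "0 \<le> s" "s \<le> N" "s \<le> M" for N M s
  proof (cases "N \<le> M")
    case True then show ?thesis using picSol_consist[OF lip L, of N M s] that by auto
  next
    case False then show ?thesis using picSol_consist[OF lip L, of M N s] that by auto
  qed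
  have "\<phi> 0 = picF g z0 (apply_bcontfun (picSol g z0 1)) 0"
    unfolding \<phi>_def using picSol_eq[OF lip L, of 1 0] by simp
  then have phi0: "\<phi> 0 = z0" by (simp add: picF_def)
  have "(\<phi> has_vector_derivative g (\<phi> t)) (at t within {0..})" if t: "t \<in> {0..}" for t
  proof -
    define N where "N = t + 1"
    have N: "0 \<le> N" "t \<in> {0..N}" using t by (auto simp: N_def)
    have d1: "(picF g z0 (apply_bcontfun (picSol g z0 N)) has_vector_derivative g (picSol g z0 N t))
        (at t within {0..N})"
      by (rule picF_deriv[OF gc _ N(2)]) simp
    have d2: "(apply_bcontfun (picSol g z0 N) has_vector_derivative g (picSol g z0 N t)) (at t within {0..N})"
      by (rule has_vector_derivative_transform_within[OF d1 zero_less_one N(2)])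
         (use picSol_eq[OF lip L N(1)] in auto)
    have at: "at t within {0..N} = at t within {0..}"
      by (rule at_within_nhd[where S="{..<N}"]) (auto simp: N_def)
    have d3: "(apply_bcontfun (picSol g z0 N) has_vector_derivative g (picSol g z0 N t)) (at t within {0..})"
      using d2 unfolding at .
    have pt: "\<phi> t = picSol g z0 N t" unfolding \<phi>_def using t cons[of t "\<bar>t\<bar>+1" N] by (auto simp: N_def)
    show ?thesis unfolding pt
    proof (rule has_vector_derivative_transform_within[OF d3 zero_less_one t])
      fix s assume s: "s \<in> {0..}" "dist s t < 1"
      then show "picSol g z0 N s = \<phi> s" unfolding \<phi>_def
        using cons[of s N "\<bar>s\<bar>+1"] by (auto simp: N_def dist_real_def)
    qed
  qed
  then show ?thesis using phi0 unfolding ode_solution_on_def by blast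
qed



lemma comp_deriv:
  fixes V :: "'a::real_normed_vector \<Rightarrow> real"
  assumes V: "\<And>z. (V has_derivative DV z) (at z)"
    and d: "(\<phi> has_vector_derivative w) (at t within I)"
  shows "((\<lambda>s. V (\<phi> s)) has_real_derivative DV (\<phi> t) w) (at t within I)"
proof -
  have "((\<lambda>s. V (\<phi> s)) has_derivative (\<lambda>h. DV (\<phi> t) (h *\<^sub>R w))) (at t within I)"
    using d V[of "\<phi> t"] unfolding has_vector_derivative_def
    by (rule has_derivative_compose)
  moreover have "linear (DV (\<phi> t))" using V[of "\<phi> t"] by (rule has_derivative_linear)
  then have "(\<lambda>h. DV (\<phi> t) (h *\<^sub>R w)) = (*) (DV (\<phi> t) w)"
    by (simp add: linear_scale fun_eq_iff)
  ultimately show ?thesis by (simp add: has_field_derivative_def)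
qed

lemma lyap_segment:
  fixes F :: "'a::real_normed_vector \<Rightarrow> 'a" and V :: "'a \<Rightarrow> real"
  assumes V: "\<And>z. (V has_derivative DV z) (at z)"
    and Vnn: "\<And>z. 0 \<le> V z"
    and dec: "\<And>z. V z < \<rho> \<Longrightarrow> DV z (F z) \<le> - \<kappa> * V z"
    and sol: "ode_solution_on F \<phi> I"
    and Iint: "\<forall>a\<in>I. \<forall>b\<in>I. \<forall>x. a \<le> x \<and> x \<le> b \<longrightarrow> x \<in> I"
    and I0: "0 \<in> I" and b: "b \<in> I" "0 \<le> b"
    and good: "\<forall>s. 0 \<le> s \<and> s < b \<longrightarrow> V (\<phi> s) < \<rho>"
  shows "V (\<phi> b) * exp (\<kappa> * b) \<le> V (\<phi> 0)"
proof -
  define W where "W s = V (\<phi> s) * exp (\<kappa> * s)" for s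
  have sub: "{0..b} \<subseteq> I"
  proof
    fix x assume "x \<in> {0..b}" then show "x \<in> I" using Iint[rule_format, OF I0 b(1), of x] by simp
  qed
  have dW: "(W has_real_derivative (V (\<phi> s) * (\<kappa> * exp (\<kappa> * s)) + DV (\<phi> s) (F (\<phi> s)) * exp (\<kappa> * s)))
      (at s within I)" if "s \<in> I" for s
    unfolding W_def
  proof (rule DERIV_mult')
    show "((\<lambda>s. V (\<phi> s)) has_real_derivative DV (\<phi> s) (F (\<phi> s))) (at s within I)"
      using comp_deriv[OF V] sol that unfolding ode_solution_on_def by blast
    show "((\<lambda>s. exp (\<kappa> * s)) has_real_derivative \<kappa> * exp (\<kappa> * s)) (at s within I)"
      by (auto intro!: derivative_eq_intros)
  qed
  have cont: "continuous_on {0..b} W"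
  proof -
    have "continuous_on I W"
      unfolding continuous_on_eq_continuous_within using dW DERIV_continuous by blast
    then show ?thesis using sub by (rule continuous_on_subset)
  qed
  have "W b \<le> W 0"
  proof (rule DERIV_nonpos_imp_decreasing_open[OF b(2) _ cont])
    fix x assume x: "0 < x" "x < b"
    have "at x within I = at x"
      by (rule at_within_open_subset[where S="{0<..<b}"]) (use x sub in auto)
    then have "DERIV W x :> (V (\<phi> x) * (\<kappa> * exp (\<kappa> * x)) + DV (\<phi> x) (F (\<phi> x)) * exp (\<kappa> * x))"
      using dW[of x] sub x by (simp add: subset_eq)
    moreover have "V (\<phi> x) * (\<kappa> * exp (\<kappa> * x)) + DV (\<phi> x) (F (\<phi> x)) * exp (\<kappa> * x) \<le> 0"
    proof -
      have "DV (\<phi> x) (F (\<phi> x)) + \<kappa> * V (\<phi> x) \<le> 0" using dec[of "\<phi> x"] good x by auto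
      then have "(DV (\<phi> x) (F (\<phi> x)) + \<kappa> * V (\<phi> x)) * exp (\<kappa> * x) \<le> 0"
        by (simp add: mult_nonpos_nonneg)
      then show ?thesis by (simp add: algebra_simps)
    qed
    ultimately show "\<exists>y. DERIV W x :> y \<and> y \<le> 0" by blast
  qed
  then show ?thesis by (simp add: W_def)
qed

lemma lyap_decay:
  fixes F :: "'a::real_normed_vector \<Rightarrow> 'a" and V :: "'a \<Rightarrow> real"
  assumes V: "\<And>z. (V has_derivative DV z) (at z)"
    and Vnn: "\<And>z. 0 \<le> V z"
    and dec: "\<And>z. V z < \<rho> \<Longrightarrow> DV z (F z) \<le> - \<kappa> * V z"
    and kap: "0 \<le> \<kappa>"
    and sol: "ode_solution_on F \<phi> I"
    and Iint: "\<forall>a\<in>I. \<forall>b\<in>I. \<forall>x. a \<le> x \<and> x \<le> b \<longrightarrow> x \<in> I"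
    and I0: "0 \<in> I" and Ipos: "I \<subseteq> {0..}"
    and init: "V (\<phi> 0) < \<rho>"
    and t: "t \<in> I"
  shows "V (\<phi> t) * exp (\<kappa> * t) \<le> V (\<phi> 0)"
proof -
  have t0: "0 \<le> t" using t Ipos by auto
  have sub: "{0..t} \<subseteq> I"
  proof
    fix x assume "x \<in> {0..t}" then show "x \<in> I" using Iint[rule_format, OF I0 t, of x] by simp
  qed
  have cVphi: "continuous_on I (\<lambda>s. V (\<phi> s))"
    unfolding continuous_on_eq_continuous_within
    using comp_deriv[OF V] sol DERIV_continuous unfolding ode_solution_on_def by blast
  have allgood: "\<forall>s. 0 \<le> s \<and> s \<le> t \<longrightarrow> V (\<phi> s) < \<rho>"
  proof (rule ccontr)
    assume nt: "\<not> ?thesis"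
    define S where "S = {0..t} \<inter> (\<lambda>s. V (\<phi> s)) -` {\<rho>..}"
    have Sne: "S \<noteq> {}" using nt by (auto simp: S_def not_less)
    have Sbdd: "bdd_below S" by (auto simp: S_def bdd_below_def)
    have Scl: "closed S" unfolding S_def
      by (rule continuous_closed_preimage) (use continuous_on_subset[OF cVphi sub] in auto)
    define s1 where "s1 = Inf S"
    have s1S: "s1 \<in> S" unfolding s1_def by (rule closed_contains_Inf[OF Sne Sbdd Scl])
    have s1I: "s1 \<in> I" "0 \<le> s1" using s1S sub by (auto simp: S_def)
    have below: "\<forall>s. 0 \<le> s \<and> s < s1 \<longrightarrow> V (\<phi> s) < \<rho>"
    proof (intro allI impI)
      fix s assume s: "0 \<le> s \<and> s < s1"
      have "s \<notin> S"
      proof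
        assume "s \<in> S" then have "s1 \<le> s" unfolding s1_def by (rule cInf_lower[OF _ Sbdd])
        then show False using s by simp
      qed
      moreover have "s \<le> t" using s s1S by (auto simp: S_def)
      ultimately show "V (\<phi> s) < \<rho>" using s by (auto simp: S_def not_le)
    qed
    have "V (\<phi> s1) * exp (\<kappa> * s1) \<le> V (\<phi> 0)"
      by (rule lyap_segment[OF V Vnn dec sol Iint I0 s1I below])
    moreover have "V (\<phi> s1) \<le> V (\<phi> s1) * exp (\<kappa> * s1)"
      using Vnn[of "\<phi> s1"] kap s1I by (simp add: mult_le_cancel_left1)
    moreover have "\<rho> \<le> V (\<phi> s1)" using s1S by (auto simp: S_def)
    ultimately show False using init by simp
  qed
  show ?thesis
    by (rule lyap_segment[OF V Vnn dec sol Iint I0 t t0]) (use allgood in auto)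
qed



lemma exp_decay_bound_tendsto:
  fixes \<phi> :: "real \<Rightarrow> 'a::metric_space"
  assumes c1: "0 < c1" and kap: "0 < \<kappa>"
    and bnd: "\<And>t. 0 \<le> t \<Longrightarrow> c1 * (dist (\<phi> t) p)^2 \<le> A * exp (- \<kappa> * t)"
  shows "(\<phi> \<longlongrightarrow> p) at_top"
proof -
  have bnd2: "dist (\<phi> t) p \<le> sqrt (A / c1 * exp (- \<kappa> * t))" if t: "0 \<le> t" for t
  proof -
    have "(dist (\<phi> t) p)^2 \<le> A / c1 * exp (- \<kappa> * t)"
      using bnd[OF t] c1 by (simp add: field_simps)
    then show ?thesis by (rule real_le_rsqrt)
  qed
  have "filterlim (\<lambda>t. \<kappa> * t) at_top at_top"
    by (rule filterlim_tendsto_pos_mult_at_top[OF tendsto_const kap filterlim_ident])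
  then have "filterlim (\<lambda>t. exp (\<kappa> * t)) at_top at_top" by (rule filterlim_compose[OF exp_at_top])
  then have "((\<lambda>t. inverse (exp (\<kappa> * t))) \<longlongrightarrow> 0) at_top" by (rule tendsto_inverse_0_at_top)
  then have lim0: "((\<lambda>t. exp (- \<kappa> * t)) \<longlongrightarrow> 0) at_top" by (simp add: exp_minus)
  have "((\<lambda>t. sqrt (A / c1 * exp (- \<kappa> * t))) \<longlongrightarrow> sqrt (A / c1 * 0)) at_top"
    by (intro tendsto_intros lim0)
  then have limB: "((\<lambda>t. sqrt (A / c1 * exp (- \<kappa> * t))) \<longlongrightarrow> 0) at_top" by simp
  have "((\<lambda>t. dist (\<phi> t) p) \<longlongrightarrow> 0) at_top"
  proof (rule tendsto_sandwich[OF _ _ tendsto_const limB])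
    show "\<forall>\<^sub>F t in at_top. 0 \<le> dist (\<phi> t) p" by simp
    show "\<forall>\<^sub>F t in at_top. dist (\<phi> t) p \<le> sqrt (A / c1 * exp (- \<kappa> * t))"
      by (rule eventually_mono[OF eventually_ge_at_top[of 0]]) (rule bnd2)
  qed
  then show ?thesis by (rule tendsto_dist_iff[THEN iffD2])
qed


lemma abstract_las:
  fixes f :: "'a::euclidean_space \<Rightarrow> 'a" and V :: "'a \<Rightarrow> real"
  assumes fp: "f p = 0"
    and V: "\<And>z. (V has_derivative DV z) (at z)"
    and Vnn: "\<And>z. 0 \<le> V z"
    and lower: "\<And>z. c1 * (dist z p)^2 \<le> V z"
    and upper: "\<And>z. V z \<le> c2 * (dist z p)^2"
    and c1: "0 < c1" and c2: "0 < c2" and rho: "0 < \<rho>" and kap: "0 < \<kappa>"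
    and dec: "\<And>z. V z < \<rho> \<Longrightarrow> DV z (f z) \<le> - \<kappa> * V z"
    and lip: "\<forall>a b. norm (g a - g b) \<le> L * norm (a - b)" and L: "0 \<le> L"
    and gf: "\<And>z. V z < \<rho> \<Longrightarrow> g z = f z"
  shows "locally_asymptotically_stable f p"
proof -
  have Vsmall: "V z < \<rho>" "V z \<le> c2 * d" if "dist z p < d" "d \<le> 1" "c2 * d < \<rho>" for z d
  proof -
    have dd: "0 \<le> dist z p" "0 \<le> d" using that zero_le_dist[of z p] by linarith+
    have "dist z p * dist z p \<le> d * 1" using that dd by (intro mult_mono) auto
    then have "(dist z p)^2 \<le> d" by (simp add: power2_eq_square)
    then have "V z \<le> c2 * d" using upper[of z] c2 by (meson mult_left_mono less_imp_le order_trans)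
    then show "V z < \<rho>" "V z \<le> c2 * d" using that by auto
  qed
  have decayI: "V (\<phi> t) \<le> V (\<phi> 0)"
    if sol: "ode_solution_on f \<phi> I" and Iint: "\<forall>a\<in>I. \<forall>b\<in>I. \<forall>x. a \<le> x \<and> x \<le> b \<longrightarrow> x \<in> I"
      and I0: "0 \<in> I" and Ipos: "I \<subseteq> {0..}" and init: "V (\<phi> 0) < \<rho>" and t: "t \<in> I" for \<phi> I t
  proof -
    have "V (\<phi> t) * exp (\<kappa> * t) \<le> V (\<phi> 0)"
      by (rule lyap_decay[OF V Vnn dec less_imp_le[OF kap] sol Iint I0 Ipos init t])
    moreover have "V (\<phi> t) \<le> V (\<phi> t) * exp (\<kappa> * t)"
      using Vnn[of "\<phi> t"] kap t Ipos by (auto simp: mult_le_cancel_left1)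
    ultimately show ?thesis by simp
  qed
  have stable: "lyapunov_stable f p"
    unfolding lyapunov_stable_def
  proof (intro allI impI)
    fix \<epsilon> :: real assume e: "0 < \<epsilon>"
    define \<delta> where "\<delta> = min 1 (min (\<rho> / (2 * c2)) (c1 * \<epsilon>^2 / (2 * c2)))"
    have d0: "0 < \<delta>" using e c1 c2 rho by (simp add: \<delta>_def)
    have d1: "\<delta> \<le> 1" "c2 * \<delta> < \<rho>" "c2 * \<delta> < c1 * \<epsilon>^2"
      using e c1 c2 rho by (auto simp: \<delta>_def min_def field_simps)
    show "\<exists>\<delta>>0. \<forall>\<phi> T. ode_solution_on f \<phi> {0..<T} \<and> 0 < T \<and> dist (\<phi> 0) p < \<delta>
          \<longrightarrow> (\<forall>t\<in>{0..<T}. dist (\<phi> t) p < \<epsilon>)"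
    proof (intro exI[of _ \<delta>] conjI allI impI ballI d0)
      fix \<phi> T t assume H: "ode_solution_on f \<phi> {0..<T} \<and> 0 < T \<and> dist (\<phi> 0) p < \<delta>"
        and t: "t \<in> {0..<(T::real)}"
      have V0: "V (\<phi> 0) < \<rho>" "V (\<phi> 0) \<le> c2 * \<delta>" using Vsmall[of "\<phi> 0" \<delta>] H d1 by auto
      have "V (\<phi> t) \<le> V (\<phi> 0)"
        by (rule decayI[of \<phi> "{0..<T}"]) (use H V0 t in auto)
      then have "c1 * (dist (\<phi> t) p)^2 < c1 * \<epsilon>^2"
        using lower[of "\<phi> t"] V0 d1 by linarith
      then have "(dist (\<phi> t) p)^2 < \<epsilon>^2" using c1 by simp
      then show "dist (\<phi> t) p < \<epsilon>" using e by (simp add: power_less_imp_less_base)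
    qed
  qed
  define \<eta> where "\<eta> = min 1 (\<rho> / (2 * c2))"
  have eta: "0 < \<eta>" using rho c2 by (simp add: \<eta>_def)
  have V0: "V z0 < \<rho>" if "dist z0 p < \<eta>" for z0
    using Vsmall(1)[of z0 \<eta>] that rho c2 by (auto simp: \<eta>_def min_def field_simps)
  have ex: "\<exists>\<phi>. ode_solution_on f \<phi> {0..} \<and> \<phi> 0 = z0" if z0: "V z0 < \<rho>" for z0
  proof -
    obtain \<phi> where \<phi>: "ode_solution_on g \<phi> {0..}" "\<phi> 0 = z0"
      using global_existence[OF lip L] by blast
    have decg: "DV z (g z) \<le> - \<kappa> * V z" if "V z < \<rho>" for z using dec[OF that] gf[OF that] by simp
    have inside: "V (\<phi> t) < \<rho>" if "t \<in> {0..}" for t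
    proof -
      have "V (\<phi> t) * exp (\<kappa> * t) \<le> V (\<phi> 0)"
        by (rule lyap_decay[OF V Vnn decg less_imp_le[OF kap] \<phi>(1) _ _ _ _ that]) (use \<phi>(2) z0 in auto)
      moreover have "V (\<phi> t) \<le> V (\<phi> t) * exp (\<kappa> * t)"
        using Vnn[of "\<phi> t"] kap that by (auto simp: mult_le_cancel_left1)
      ultimately show ?thesis using \<phi>(2) z0 by simp
    qed
    have "ode_solution_on f \<phi> {0..}"
      unfolding ode_solution_on_def
    proof
      fix t :: real assume t: "t \<in> {0..}"
      have "(\<phi> has_vector_derivative g (\<phi> t)) (at t within {0..})"
        using \<phi>(1) t unfolding ode_solution_on_def by blast
      then show "(\<phi> has_vector_derivative f (\<phi> t)) (at t within {0..})"
        using gf[OF inside[OF t]] by simp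
    qed
    then show ?thesis using \<phi>(2) by blast
  qed
  have conv: "(\<phi> \<longlongrightarrow> p) at_top" if H: "ode_solution_on f \<phi> {0..}" and z0: "V (\<phi> 0) < \<rho>" for \<phi>
  proof (rule exp_decay_bound_tendsto[OF c1 kap])
    fix t :: real assume t: "0 \<le> t"
    have "V (\<phi> t) * exp (\<kappa> * t) \<le> V (\<phi> 0)"
      by (rule lyap_decay[OF V Vnn dec less_imp_le[OF kap] H]) (use z0 t in auto)
    then have "V (\<phi> t) \<le> V (\<phi> 0) * exp (- \<kappa> * t)"
      by (simp add: exp_minus field_simps)
    then show "c1 * (dist (\<phi> t) p)^2 \<le> V (\<phi> 0) * exp (- \<kappa> * t)" using lower[of "\<phi> t"] by linarith
  qed
  have attractive: "locally_attractive f p"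
    unfolding locally_attractive_def
  proof (intro exI[of _ \<eta>] conjI allI impI eta)
    fix z0 assume "dist z0 p < \<eta>"
    then have z0: "V z0 < \<rho>" by (rule V0)
    show "\<exists>\<phi>. ode_solution_on f \<phi> {0..} \<and> \<phi> 0 = z0" using ex[OF z0] .
  next
    fix z0 \<phi> assume "dist z0 p < \<eta>" and H: "ode_solution_on f \<phi> {0..} \<and> \<phi> 0 = z0"
    then have z0: "V (\<phi> 0) < \<rho>" using V0 by auto
    show "(\<phi> \<longlongrightarrow> p) at_top" using conv H z0 by blast
  qed
  show ?thesis unfolding locally_asymptotically_stable_def using fp stable attractive by blast
qed



definition hh :: "real \<Rightarrow> real \<Rightarrow> real \<Rightarrow> nat \<Rightarrow> real \<Rightarrow> real" where
  "hh a9 a10 a11 n v = a9 * (1 + a10 * v ^ n) / (1 + a11 * v ^ n)"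

definition GG :: "real \<Rightarrow> real \<Rightarrow> real \<Rightarrow> nat \<Rightarrow> real \<Rightarrow> real \<Rightarrow> real" where
  "GG a9 a10 a11 n u v = a9 * (a10 - a11) * (\<Sum>i<n. v ^ (n - Suc i) * u ^ i) / ((1 + a11 * u ^ n) * (1 + a11 * v ^ n))"

lemma hh_diff:
  assumes "0 \<le> u" "0 \<le> v" "0 \<le> a11"
  shows "hh a9 a10 a11 n u - hh a9 a10 a11 n v = GG a9 a10 a11 n u v * (u - v)"
proof -
  have du: "1 + a11 * u ^ n > 0" using assms by (simp add: add_pos_nonneg)
  have dv: "1 + a11 * v ^ n > 0" using assms by (simp add: add_pos_nonneg)
  have s: "u ^ n - v ^ n = (u - v) * (\<Sum>i<n. v ^ (n - Suc i) * u ^ i)" by (rule power_diff_sumr2)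
  have "hh a9 a10 a11 n u - hh a9 a10 a11 n v
      = a9 * (a10 - a11) * (u ^ n - v ^ n) / ((1 + a11 * u ^ n) * (1 + a11 * v ^ n))"
    unfolding hh_def using du dv by (simp add: field_simps)
  also have "\<dots> = GG a9 a10 a11 n u v * (u - v)"
    unfolding GG_def s by (simp add: field_simps)
  finally show ?thesis .
qed

lemma hh_nonneg: "0 \<le> v \<Longrightarrow> 0 \<le> a9 \<Longrightarrow> 0 \<le> a10 \<Longrightarrow> 0 \<le> a11 \<Longrightarrow> 0 \<le> hh a9 a10 a11 n v"
  unfolding hh_def by (simp add: add_nonneg_nonneg)

lemma hh_le: "0 \<le> v \<Longrightarrow> 0 \<le> a9 \<Longrightarrow> 0 < a11 \<Longrightarrow> a11 \<le> a10 \<Longrightarrow> hh a9 a10 a11 n v \<le> a9 * a10 / a11"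
proof -
  assume v: "0 \<le> v" and a9: "0 \<le> a9" and a11: "0 < a11" and a: "a11 \<le> a10"
  have d: "0 < 1 + a11 * v ^ n" using v a11 by (simp add: add_pos_nonneg)
  have "a11 * (1 + a10 * v ^ n) \<le> a10 * (1 + a11 * v ^ n)" using a by (simp add: algebra_simps)
  then have "(1 + a10 * v ^ n) / (1 + a11 * v ^ n) \<le> a10 / a11"
    using d a11 by (simp add: divide_simps mult.commute)
  then have "a9 * ((1 + a10 * v ^ n) / (1 + a11 * v ^ n)) \<le> a9 * (a10 / a11)"
    using a9 by (rule mult_left_mono)
  then show ?thesis unfolding hh_def by simp
qed

lemma GG_pos:
  assumes "0 < v" "0 < a9" "a11 < a10" "0 \<le> a11" "1 \<le> n"
  shows "0 < GG a9 a10 a11 n v v"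
proof -
  have "0 < (\<Sum>i<n. v ^ (n - Suc i) * v ^ i)"
    using assms by (intro sum_pos) (auto simp: lessThan_empty_iff)
  moreover have "0 < (1 + a11 * v ^ n)" using assms by (simp add: add_pos_nonneg)
  ultimately show ?thesis unfolding GG_def using assms by simp
qed

lemma GG_cont:
  assumes "0 \<le> v" "0 \<le> a11"
  shows "isCont (\<lambda>u. GG a9 a10 a11 n u v) v"
proof -
  have "0 < (1 + a11 * v ^ n)" using assms by (simp add: add_pos_nonneg)
  then show ?thesis unfolding GG_def by (intro continuous_intros) auto
qed

lemma sum_pow_bound:
  fixes u v M :: real
  assumes "0 \<le> u" "u \<le> M" "0 \<le> v" "v \<le> M"
  shows "\<bar>\<Sum>i<n. v ^ (n - Suc i) * u ^ i\<bar> \<le> real n * M ^ (n - 1)"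
proof -
  have "\<bar>\<Sum>i<n. v ^ (n - Suc i) * u ^ i\<bar> = (\<Sum>i<n. v ^ (n - Suc i) * u ^ i)"
    using assms by (intro abs_of_nonneg sum_nonneg) auto
  also have "\<dots> \<le> (\<Sum>i<n. M ^ (n - Suc i) * M ^ i)"
    using assms by (intro sum_mono mult_mono power_mono) auto
  also have "\<dots> = (\<Sum>i<n. M ^ (n - 1))"
    by (intro sum.cong refl) (simp add: power_add[symmetric])
  also have "\<dots> = real n * M ^ (n - 1)" by simp
  finally show ?thesis .
qed

lemma hh_lip:
  assumes "0 \<le> u" "u \<le> M" "0 \<le> v" "v \<le> M" "0 \<le> a9" "0 \<le> a11" "a11 \<le> a10"
  shows "\<bar>hh a9 a10 a11 n u - hh a9 a10 a11 n v\<bar> \<le> a9 * (a10 - a11) * (real n * M ^ (n - 1)) * \<bar>u - v\<bar>"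
proof -
  have du: "1 \<le> 1 + a11 * u ^ n" using assms by simp
  have dv: "1 \<le> 1 + a11 * v ^ n" using assms by simp
  have "\<bar>GG a9 a10 a11 n u v\<bar> \<le> a9 * (a10 - a11) * \<bar>\<Sum>i<n. v ^ (n - Suc i) * u ^ i\<bar>"
  proof -
    have "\<bar>GG a9 a10 a11 n u v\<bar> = a9 * (a10 - a11) * \<bar>\<Sum>i<n. v ^ (n - Suc i) * u ^ i\<bar> / ((1 + a11 * u ^ n) * (1 + a11 * v ^ n))"
      unfolding GG_def using assms du dv by (simp add: abs_mult abs_divide)
    also have "\<dots> \<le> a9 * (a10 - a11) * \<bar>\<Sum>i<n. v ^ (n - Suc i) * u ^ i\<bar> / 1"
    proof (rule divide_left_mono)
      show "1 \<le> (1 + a11 * u ^ n) * (1 + a11 * v ^ n)" using mult_mono[OF du dv] du by simp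
      then show "0 < (1 + a11 * u ^ n) * (1 + a11 * v ^ n) * 1" by simp
      show "0 \<le> a9 * (a10 - a11) * \<bar>\<Sum>i<n. v ^ (n - Suc i) * u ^ i\<bar>" using assms by simp
    qed
    finally show ?thesis by simp
  qed
  also have "\<dots> \<le> a9 * (a10 - a11) * (real n * M ^ (n - 1))"
    using sum_pow_bound[OF assms(1-4)] assms by (intro mult_left_mono) auto
  finally have G: "\<bar>GG a9 a10 a11 n u v\<bar> \<le> a9 * (a10 - a11) * (real n * M ^ (n - 1))" .
  show ?thesis
    unfolding hh_diff[OF assms(1,3,6)] abs_mult
    using G by (intro mult_right_mono) auto
qed

lemma quad_neg_def:
  fixes a c K :: real
  assumes a: "0 < a" and c: "0 < c" and disc: "K^2 < 4 * a * c"
  shows "\<exists>m>0. \<forall>X W. - a * X^2 + K * X * W - c * W^2 \<le> - m * (X^2 + W^2)"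
proof -
  define \<Delta> where "\<Delta> = 4 * a * c - K^2"
  define m where "m = min (a / 2) (\<Delta> / (4 * (a + c)))"
  have D: "0 < \<Delta>" using disc by (simp add: \<Delta>_def)
  have m0: "0 < m" using a c D by (simp add: m_def)
  have ma: "m \<le> a / 2" unfolding m_def by (rule min.cobounded1)
  have mac: "m * (a + c) \<le> \<Delta> / 4"
  proof -
    have "m \<le> \<Delta> / (4 * (a + c))" unfolding m_def by (rule min.cobounded2)
    then have "m * (a + c) \<le> \<Delta> / (4 * (a + c)) * (a + c)" using a c by (intro mult_right_mono) auto
    also have "\<dots> = \<Delta> / 4" using a c by (simp add: field_simps)
    finally show ?thesis .
  qed
  have mc: "m \<le> c"
  proof -
    have "\<Delta> \<le> 4 * a * c" using \<Delta>_def by simp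
    then have "m * (a + c) \<le> a * c" using mac by simp
    moreover have "a * c \<le> c * (a + c)" using a c by (simp add: algebra_simps)
    ultimately have "m * (a + c) \<le> c * (a + c)" by linarith
    then show ?thesis using a c by (simp add: mult_le_cancel_right)
  qed
  have key: "K^2 \<le> 4 * (a - m) * (c - m)"
  proof -
    have "4 * (a - m) * (c - m) = 4 * a * c - 4 * m * (a + c) + 4 * m^2" by (simp add: algebra_simps power2_eq_square)
    moreover have "0 \<le> m^2" by simp
    ultimately show ?thesis using mac \<Delta>_def by linarith
  qed
  show ?thesis
  proof (intro exI[of _ m] conjI allI m0)
    fix X W :: real
    have am: "0 < a - m" using ma a by simp
    have "0 \<le> (2 * (a - m) * X - K * W)^2 + (4 * (a - m) * (c - m) - K^2) * W^2"
      using key by (intro add_nonneg_nonneg) auto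
    also have "\<dots> = 4 * (a - m) * ((a - m) * X^2 - K * X * W + (c - m) * W^2)"
      by (simp add: algebra_simps power2_eq_square)
    finally have "0 \<le> (a - m) * X^2 - K * X * W + (c - m) * W^2"
      using am by (simp add: zero_le_mult_iff)
    then show "- a * X^2 + K * X * W - c * W^2 \<le> - m * (X^2 + W^2)" by (simp add: algebra_simps)
  qed
qed

lemma quad_combine:
  fixes A0 K al1 be6 m m1 E hx X W Z :: real
  assumes base: "- A0 * X^2 + K * X * W - al1 * W^2 \<le> - m1 * (X^2 + W^2)"
    and m: "0 < m" "m \<le> m1" "m \<le> be6" and E: "\<bar>E\<bar> \<le> m" and h: "0 \<le> hx"
  shows "- (A0 + hx) * X^2 + K * X * W - al1 * W^2 - be6 * Z^2 + E * X * Z \<le> - (m / 2) * (X^2 + W^2 + Z^2)"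
proof -
  have sq: "(\<bar>X\<bar> - \<bar>Z\<bar>)^2 = X^2 + Z^2 - 2 * (\<bar>X\<bar> * \<bar>Z\<bar>)"
    by (simp add: power2_diff)
  have xz: "2 * (\<bar>X\<bar> * \<bar>Z\<bar>) \<le> X^2 + Z^2"
    using sq zero_le_power2[of "\<bar>X\<bar> - \<bar>Z\<bar>"] by linarith
  have e1: "E * X * Z \<le> \<bar>E\<bar> * (\<bar>X\<bar> * \<bar>Z\<bar>)" by (simp add: abs_mult[symmetric])
  have e2: "\<bar>E\<bar> * (\<bar>X\<bar> * \<bar>Z\<bar>) \<le> m * (\<bar>X\<bar> * \<bar>Z\<bar>)" using E by (intro mult_right_mono) auto
  have e3: "m * (2 * (\<bar>X\<bar> * \<bar>Z\<bar>)) \<le> m * (X^2 + Z^2)" using xz m by (intro mult_left_mono) auto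
  have EXZ: "E * X * Z \<le> m * X^2 / 2 + m * Z^2 / 2"
    using e1 e2 e3 by (simp add: algebra_simps)
  have f1: "m * X^2 + m * W^2 \<le> m1 * (X^2 + W^2)"
    using m by (simp add: distrib_left[symmetric] mult_right_mono)
  have f2: "m * Z^2 \<le> be6 * Z^2" using m by (intro mult_right_mono) auto
  have f3: "0 \<le> hx * X^2" using h by simp
  have f4: "0 \<le> m * W^2" using m by simp
  have L: "- (A0 + hx) * X^2 + K * X * W - al1 * W^2 - be6 * Z^2 + E * X * Z
      = (- A0 * X^2 + K * X * W - al1 * W^2) - hx * X^2 - be6 * Z^2 + E * X * Z"
    by (simp add: algebra_simps)
  have R: "- (m / 2) * (X^2 + W^2 + Z^2) = - (m * X^2 / 2) - (m * W^2 / 2) - (m * Z^2 / 2)"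
    by (simp add: algebra_simps)
  show ?thesis unfolding L R using base EXZ f1 f2 f3 f4 by linarith
qed



lemma dist3:
  fixes z p :: "real \<times> real \<times> real"
  shows "(dist z p)^2 = (fst z - fst p)^2 + (fst (snd z) - fst (snd p))^2 + (snd (snd z) - snd (snd p))^2"
  by (cases z; cases p) (simp add: dist_Pair_Pair dist_real_def)

lemma norm3:
  fixes w :: "real \<times> real \<times> real"
  shows "(norm w)^2 = (fst w)^2 + (fst (snd w))^2 + (snd (snd w))^2"
  using dist3[of w 0] by (simp add: dist_norm)

lemma norm3_comp:
  fixes w :: "real \<times> real \<times> real"
  shows "\<bar>fst w\<bar> \<le> norm w" "\<bar>fst (snd w)\<bar> \<le> norm w" "\<bar>snd (snd w)\<bar> \<le> norm w"
proof -
  have n: "(norm w)^2 = (fst w)^2 + (fst (snd w))^2 + (snd (snd w))^2" by (rule norm3)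
  show "\<bar>fst w\<bar> \<le> norm w"
    by (rule abs_le_square_iff[THEN iffD2, of _ "norm w", simplified]) (use n in \<open>simp\<close>)
  show "\<bar>fst (snd w)\<bar> \<le> norm w"
    by (rule abs_le_square_iff[THEN iffD2, of _ "norm w", simplified]) (use n in \<open>simp\<close>)
  show "\<bar>snd (snd w)\<bar> \<le> norm w"
    by (rule abs_le_square_iff[THEN iffD2, of _ "norm w", simplified]) (use n in \<open>simp\<close>)
qed

lemma norm3_le_sum:
  fixes w :: "real \<times> real \<times> real"
  shows "norm w \<le> \<bar>fst w\<bar> + \<bar>fst (snd w)\<bar> + \<bar>snd (snd w)\<bar>"
proof -
  have "(norm w)^2 \<le> (\<bar>fst w\<bar> + \<bar>fst (snd w)\<bar> + \<bar>snd (snd w)\<bar>)^2"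
    unfolding norm3 by (simp add: power2_eq_square algebra_simps)
  then show ?thesis by (rule power2_le_imp_le) simp
qed

lemma lip3:
  fixes F :: "real \<times> real \<times> real \<Rightarrow> real \<times> real \<times> real"
  assumes C: "0 \<le> C"
    and h1: "\<bar>fst (F q1) - fst (F q2)\<bar> \<le> C * (\<bar>fst q1 - fst q2\<bar> + \<bar>fst (snd q1) - fst (snd q2)\<bar> + \<bar>snd (snd q1) - snd (snd q2)\<bar>)"
    and h2: "\<bar>fst (snd (F q1)) - fst (snd (F q2))\<bar> \<le> C * (\<bar>fst q1 - fst q2\<bar> + \<bar>fst (snd q1) - fst (snd q2)\<bar> + \<bar>snd (snd q1) - snd (snd q2)\<bar>)"
    and h3: "\<bar>snd (snd (F q1)) - snd (snd (F q2))\<bar> \<le> C * (\<bar>fst q1 - fst q2\<bar> + \<bar>fst (snd q1) - fst (snd q2)\<bar> + \<bar>snd (snd q1) - snd (snd q2)\<bar>)"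
  shows "norm (F q1 - F q2) \<le> (9 * C) * norm (q1 - q2)"
proof -
  have s: "\<bar>fst q1 - fst q2\<bar> + \<bar>fst (snd q1) - fst (snd q2)\<bar> + \<bar>snd (snd q1) - snd (snd q2)\<bar> \<le> 3 * norm (q1 - q2)"
    using norm3_comp[of "q1 - q2"] by simp
  have "norm (F q1 - F q2) \<le> \<bar>fst (F q1) - fst (F q2)\<bar> + \<bar>fst (snd (F q1)) - fst (snd (F q2))\<bar> + \<bar>snd (snd (F q1)) - snd (snd (F q2))\<bar>"
    using norm3_le_sum[of "F q1 - F q2"] by simp
  also have "\<dots> \<le> 3 * (C * (3 * norm (q1 - q2)))"
    using h1 h2 h3 mult_left_mono[OF s C] by linarith
  finally show ?thesis by simp
qed

definition clip :: "real \<Rightarrow> real \<Rightarrow> real \<Rightarrow> real" where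
  "clip a b t = max a (min b t)"

lemma clip_lip: "a \<le> b \<Longrightarrow> \<bar>clip a b s - clip a b t\<bar> \<le> \<bar>s - t\<bar>"
  unfolding clip_def by (auto simp: max_def min_def abs_if)

lemma clip_range: "a \<le> b \<Longrightarrow> a \<le> clip a b t \<and> clip a b t \<le> b"
  unfolding clip_def by auto

lemma clip_id: "a \<le> t \<Longrightarrow> t \<le> b \<Longrightarrow> clip a b t = t"
  unfolding clip_def by auto

definition proj3 :: "real \<times> real \<times> real \<Rightarrow> real \<Rightarrow> real \<times> real \<times> real \<Rightarrow> real \<times> real \<times> real" where
  "proj3 p R z = (clip (fst p - R) (fst p + R) (fst z), clip (fst (snd p) - R) (fst (snd p) + R) (fst (snd z)),
      clip (snd (snd p) - R) (snd (snd p) + R) (snd (snd z)))"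

lemma proj3_lip:
  assumes "0 \<le> R"
  shows "norm (proj3 p R z1 - proj3 p R z2) \<le> norm (z1 - z2)"
proof -
  have a: "\<bar>fst (proj3 p R z1 - proj3 p R z2)\<bar> \<le> \<bar>fst (z1 - z2)\<bar>"
    using clip_lip[of "fst p - R" "fst p + R"] assms by (simp add: proj3_def)
  have b: "\<bar>fst (snd (proj3 p R z1 - proj3 p R z2))\<bar> \<le> \<bar>fst (snd (z1 - z2))\<bar>"
    using clip_lip[of "fst (snd p) - R" "fst (snd p) + R"] assms by (simp add: proj3_def)
  have c: "\<bar>snd (snd (proj3 p R z1 - proj3 p R z2))\<bar> \<le> \<bar>snd (snd (z1 - z2))\<bar>"
    using clip_lip[of "snd (snd p) - R" "snd (snd p) + R"] assms by (simp add: proj3_def)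
  have "(norm (proj3 p R z1 - proj3 p R z2))^2 \<le> (norm (z1 - z2))^2"
    unfolding norm3 using a b c
    by (intro add_mono) (simp_all add: abs_le_square_iff[symmetric])
  then show ?thesis by (rule power2_le_imp_le) simp
qed

lemma proj3_range:
  assumes "0 \<le> R"
  shows "\<bar>fst (proj3 p R z) - fst p\<bar> \<le> R" "\<bar>fst (snd (proj3 p R z)) - fst (snd p)\<bar> \<le> R"
    "\<bar>snd (snd (proj3 p R z)) - snd (snd p)\<bar> \<le> R"
  using clip_range[of "fst p - R" "fst p + R" "fst z"] clip_range[of "fst (snd p) - R" "fst (snd p) + R" "fst (snd z)"]
    clip_range[of "snd (snd p) - R" "snd (snd p) + R" "snd (snd z)"] assms
  by (auto simp: proj3_def abs_le_iff)

lemma proj3_id: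
  assumes "\<bar>fst z - fst p\<bar> \<le> R" "\<bar>fst (snd z) - fst (snd p)\<bar> \<le> R" "\<bar>snd (snd z) - snd (snd p)\<bar> \<le> R"
  shows "proj3 p R z = z"
  using assms by (cases z) (auto simp: proj3_def clip_id abs_le_iff)

definition Vf :: "real \<Rightarrow> real \<Rightarrow> real \<times> real \<times> real \<Rightarrow> real \<times> real \<times> real \<Rightarrow> real" where
  "Vf al be p z = (fst z - fst p)^2 + al * (fst z + fst (snd z) - fst p - fst (snd p))^2 + be * (snd (snd z) - snd (snd p))^2"

definition DVf :: "real \<Rightarrow> real \<Rightarrow> real \<times> real \<times> real \<Rightarrow> real \<times> real \<times> real \<Rightarrow> real \<times> real \<times> real \<Rightarrow> real" where
  "DVf al be p z w = 2 * (fst z - fst p) * fst w + 2 * al * (fst z + fst (snd z) - fst p - fst (snd p)) * (fst w + fst (snd w))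
     + 2 * be * (snd (snd z) - snd (snd p)) * snd (snd w)"

lemma Vf_deriv: "(Vf al be p has_derivative DVf al be p z) (at z)"
proof -
  have "((\<lambda>z. Vf al be p z) has_derivative DVf al be p z) (at z)"
    unfolding Vf_def DVf_def
    by (auto intro!: derivative_eq_intros simp: fun_eq_iff algebra_simps)
  then show ?thesis by simp
qed



lemma lower_real:
  fixes X Y Z al be :: real
  assumes "0 < al" "0 < be"
  shows "min 1 (min al be) / 3 * (X^2 + Y^2 + Z^2) \<le> X^2 + al * (X + Y)^2 + be * Z^2"
proof -
  define \<mu> where "\<mu> = min 1 (min al be)"
  have mu: "0 < \<mu>" "\<mu> \<le> 1" "\<mu> \<le> al" "\<mu> \<le> be" using assms by (auto simp: \<mu>_def)
  have y: "Y^2 \<le> 2 * (X + Y)^2 + 2 * X^2"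
  proof -
    have "0 \<le> (X + Y + X)^2" by simp
    then show ?thesis by (simp add: power2_eq_square algebra_simps)
  qed
  have s: "X^2 + Y^2 + Z^2 \<le> 3 * (X^2 + (X + Y)^2 + Z^2)"
  proof -
    have aux: "P + Q + R \<le> 3*(P + S + R)" if "Q \<le> 2*S + 2*P" "0 \<le> R" "0 \<le> S" "0 \<le> P" for P Q R S :: real
      using that by (simp add: distrib_left)
    show ?thesis by (rule aux[OF y]) auto
  qed
  have "\<mu> / 3 * (X^2 + Y^2 + Z^2) \<le> \<mu> / 3 * (3 * (X^2 + (X + Y)^2 + Z^2))"
    using s mu by (intro mult_left_mono) auto
  also have "\<dots> = \<mu> * X^2 + \<mu> * (X + Y)^2 + \<mu> * Z^2" by (simp add: algebra_simps)
  also have "\<dots> \<le> X^2 + al * (X + Y)^2 + be * Z^2"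
    using mu by (intro add_mono mult_right_mono) (auto intro: mult_right_mono[of \<mu> 1, simplified])
  finally show ?thesis by (simp add: \<mu>_def)
qed

lemma upper_real:
  fixes X Y Z al be :: real
  assumes "0 < al" "0 < be"
  shows "X^2 + al * (X + Y)^2 + be * Z^2 \<le> (1 + 2 * al + be) * (X^2 + Y^2 + Z^2)"
proof -
  have "(X + Y)^2 \<le> 2 * X^2 + 2 * Y^2"
  proof -
    have "0 \<le> (X - Y)^2" by simp
    then show ?thesis by (simp add: power2_eq_square algebra_simps)
  qed
  then have "al * (X + Y)^2 \<le> al * (2 * X^2 + 2 * Y^2)" using assms by (intro mult_left_mono) auto
  then have T: "al * (X + Y)^2 \<le> al * (2 * X^2) + al * (2 * Y^2)" by (simp add: distrib_left)
  moreover have "0 \<le> al * Y^2" "0 \<le> be * X^2" "0 \<le> be * Y^2" "0 \<le> al * Z^2" "0 \<le> Y^2" "0 \<le> Z^2" "0 \<le> al * X^2"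
    using assms by auto
  moreover have "(1 + 2 * al + be) * (X^2 + Y^2 + Z^2) = X^2 + Y^2 + Z^2 + al * (2 * X^2) + al * (2 * Y^2)
      + 2 * (al * Z^2) + be * X^2 + be * Y^2 + be * Z^2"
    by (simp add: algebra_simps)
  ultimately show ?thesis using T by linarith
qed

lemma V_upper3:
  fixes X W Z al be :: real
  assumes "0 < al" "0 < be"
  shows "X^2 + al * W^2 + be * Z^2 \<le> (1 + al + be) * (X^2 + W^2 + Z^2)"
proof -
  have "0 \<le> al * X^2" "0 \<le> be * X^2" "0 \<le> W^2" "0 \<le> be * W^2" "0 \<le> Z^2" "0 \<le> al * Z^2"
    using assms by auto
  then show ?thesis by (simp add: algebra_simps)
qed

lemma prod_lip:
  fixes h1 h2 x1 x2 v1 v2 Hm Xm Lh :: real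
  assumes "\<bar>h1\<bar> \<le> Hm" "\<bar>x2\<bar> \<le> Xm" "\<bar>h1 - h2\<bar> \<le> Lh * \<bar>v1 - v2\<bar>"
  shows "\<bar>h1 * x1 - h2 * x2\<bar> \<le> Hm * \<bar>x1 - x2\<bar> + Xm * (Lh * \<bar>v1 - v2\<bar>)"
proof -
  have "h1 * x1 - h2 * x2 = h1 * (x1 - x2) + x2 * (h1 - h2)" by (simp add: algebra_simps)
  then have "\<bar>h1 * x1 - h2 * x2\<bar> \<le> \<bar>h1\<bar> * \<bar>x1 - x2\<bar> + \<bar>x2\<bar> * \<bar>h1 - h2\<bar>"
    by (metis abs_mult abs_triangle_ineq)
  also have "\<dots> \<le> Hm * \<bar>x1 - x2\<bar> + Xm * (Lh * \<bar>v1 - v2\<bar>)"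
    using assms by (intro add_mono mult_mono) auto
  finally show ?thesis .
qed

lemma DV_ident:
  fixes a1 k2 a4 c a6 xs ys vs hs h G x y v al be K :: real
  assumes e1: "a1 + (a4 - a1) * ys - ((a1 + k2) + hs) * xs = 0"
    and e2: "hs * xs - a4 * ys = 0"
    and e3: "c * xs - a6 * vs = 0"
    and hd: "h - hs = G * (v - vs)"
    and Kid: "K = (a4 - a1) - al * k2"
  shows "2 * (x - xs) * (a1 + (a4 - a1) * y - ((a1 + k2) + h) * x)
      + 2 * al * (x + y - xs - ys) * ((a1 + (a4 - a1) * y - ((a1 + k2) + h) * x) + (h * x - a4 * y))
      + 2 * be * (v - vs) * (c * x - a6 * v)
    = 2 * (- ((a4 + k2) + h) * (x - xs)^2 + K * (x - xs) * (x + y - xs - ys) - (al * a1) * (x + y - xs - ys)^2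
        - (be * a6) * (v - vs)^2 + (be * c - xs * G) * (x - xs) * (v - vs))"
  using assms by algebra



lemma hiv_main:
  fixes a1 k2 a4 a5 a6 a7 a8 a9 a10 a11 xs ys vs :: real and n :: nat
  assumes a1: "0 < a1" and k2: "0 < k2" and a4: "0 < a4" and cpos: "0 < a5 * (a7 / a8)"
    and a6: "0 < a6" and a9: "0 < a9" and a11: "0 < a11" and a10: "a11 < a10" and n: "1 \<le> n"
    and xs: "0 < xs" and vs: "0 < vs"
    and eq: "hiv_field a1 (a1 + k2) a4 a5 a6 a7 a8 a9 a10 a11 n (xs, ys, vs) = (0, 0, 0)"
  shows "locally_asymptotically_stable (hiv_field a1 (a1 + k2) a4 a5 a6 a7 a8 a9 a10 a11 n) (xs, ys, vs)"
proof -
  define c where "c = a5 * (a7 / a8)"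
  have c: "0 < c" using cpos by (simp add: c_def)
  define f where "f = hiv_field a1 (a1 + k2) a4 a5 a6 a7 a8 a9 a10 a11 n"
  define H where "H = hh a9 a10 a11 n"
  have fcomp: "f z = (a1 + (a4 - a1) * fst (snd z) - ((a1 + k2) + H (snd (snd z))) * fst z,
      H (snd (snd z)) * fst z - a4 * fst (snd z), c * fst z - a6 * snd (snd z))" for z
    by (cases z) (simp add: f_def hiv_field_def H_def hh_def c_def Let_def)
  define p where "p = (xs, ys, vs)"
  define hs where "hs = H vs"
  have fp: "f p = 0" using eq by (simp add: f_def p_def zero_prod_def)
  have e1: "a1 + (a4 - a1) * ys - ((a1 + k2) + hs) * xs = 0"
    and e2: "hs * xs - a4 * ys = 0" and e3: "c * xs - a6 * vs = 0"
    using fp fcomp[of p] by (simp_all add: p_def hs_def zero_prod_def)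
  define A0 where "A0 = a4 + k2"
  have A0: "0 < A0" using a4 k2 by (simp add: A0_def)
  define al where "al = (2 * A0 * a1 + (a4 - a1) * k2) / k2^2"
  define K where "K = - 2 * A0 * a1 / k2"
  have num: "2 * A0 * a1 + (a4 - a1) * k2 = 2 * a4 * a1 + a1 * k2 + a4 * k2"
    by (simp add: A0_def algebra_simps)
  have al: "0 < al" unfolding al_def num using a1 a4 k2 by (intro divide_pos_pos add_pos_pos) auto
  have Kid: "K = (a4 - a1) - al * k2"
    using k2 by (simp add: K_def al_def power2_eq_square field_simps)
  have disc: "K^2 < 4 * A0 * (al * a1)"
  proof -
    have "4 * A0 * (al * a1) - K^2 = 4 * A0 * a1 * (A0 * a1 + (a4 - a1) * k2) / k2^2"
      using k2 by (simp add: K_def al_def power2_eq_square field_simps)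
    also have "A0 * a1 + (a4 - a1) * k2 = a4 * (a1 + k2)" by (simp add: A0_def algebra_simps)
    finally have "4 * A0 * (al * a1) - K^2 = 4 * A0 * a1 * (a4 * (a1 + k2)) / k2^2" .
    moreover have "0 < 4 * A0 * a1 * (a4 * (a1 + k2)) / k2^2" using A0 a1 a4 k2 by simp
    ultimately show ?thesis by linarith
  qed
  obtain m1 where m1: "0 < m1" "\<forall>X W. - A0 * X^2 + K * X * W - (al * a1) * W^2 \<le> - m1 * (X^2 + W^2)"
    using quad_neg_def[OF A0 _ disc] al a1 by auto
  define Gs where "Gs = GG a9 a10 a11 n vs vs"
  have Gs: "0 < Gs" unfolding Gs_def using vs a9 a10 a11 n by (intro GG_pos) auto
  define be where "be = xs * Gs / c"
  have be: "0 < be" using xs Gs c by (simp add: be_def)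
  have bec: "be * c = xs * Gs" using c by (simp add: be_def)
  define m where "m = min m1 (be * a6)"
  have m: "0 < m" "m \<le> m1" "m \<le> be * a6" using m1 be a6 by (auto simp: m_def)
  obtain r where r: "0 < r" "\<And>u. \<bar>u - vs\<bar> < r \<Longrightarrow> \<bar>GG a9 a10 a11 n u vs - Gs\<bar> < m / xs"
  proof -
    have "isCont (\<lambda>u. GG a9 a10 a11 n u vs) vs" using vs a11 by (intro GG_cont) auto
    then have lim: "(\<lambda>u. GG a9 a10 a11 n u vs) \<midarrow>vs\<rightarrow> Gs" by (simp add: isCont_def Gs_def)
    have mx: "0 < m / xs" using m xs by simp
    from LIM_D[OF lim mx] obtain s where s: "0 < s"
      "\<forall>x. x \<noteq> vs \<and> norm (x - vs) < s \<longrightarrow> norm (GG a9 a10 a11 n x vs - Gs) < m / xs"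
      by blast
    show ?thesis
    proof (rule that[OF s(1)])
      fix u assume u: "\<bar>u - vs\<bar> < s"
      show "\<bar>GG a9 a10 a11 n u vs - Gs\<bar> < m / xs"
      proof (cases "u = vs")
        case True then show ?thesis using m xs by (simp add: Gs_def)
      next
        case False then show ?thesis using s(2) u by auto
      qed
    qed
  qed
  define R where "R = vs / 2"
  have R: "0 < R" using vs by (simp add: R_def)
  define r0 where "r0 = min r R"
  have r0: "0 < r0" "r0 \<le> r" "r0 \<le> R" using r R by (auto simp: r0_def)
  define V where "V = Vf al be p"
  define DV where "DV = DVf al be p"
  define c1 where "c1 = min 1 (min al be) / 3"
  define c2 where "c2 = 1 + 2 * al + be"
  define \<kappa> where "\<kappa> = m / (1 + al + be)"
  define \<rho> where "\<rho> = c1 * r0^2"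
  have c1: "0 < c1" using al be by (simp add: c1_def)
  have c2: "0 < c2" using al be by (simp add: c2_def)
  have kap: "0 < \<kappa>" using m al be by (simp add: \<kappa>_def)
  have rho: "0 < \<rho>" using c1 r0 by (simp add: \<rho>_def)
  have Vexp: "V z = (fst z - xs)^2 + al * ((fst z - xs) + (fst (snd z) - ys))^2 + be * (snd (snd z) - vs)^2" for z
    by (simp add: V_def Vf_def p_def algebra_simps)
  have d3: "(dist z p)^2 = (fst z - xs)^2 + (fst (snd z) - ys)^2 + (snd (snd z) - vs)^2" for z
    using dist3[of z p] by (simp add: p_def)
  have lower: "c1 * (dist z p)^2 \<le> V z" for z
    unfolding d3 Vexp c1_def by (rule lower_real[OF al be])
  have upper: "V z \<le> c2 * (dist z p)^2" for z
    unfolding d3 Vexp c2_def by (rule upper_real[OF al be])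
  have Vnn: "0 \<le> V z" for z using lower[of z] c1 by (smt (verit) zero_le_power2 mult_nonneg_nonneg)
  have region: "\<bar>fst z - xs\<bar> < r0 \<and> \<bar>fst (snd z) - ys\<bar> < r0 \<and> \<bar>snd (snd z) - vs\<bar> < r0" if "V z < \<rho>" for z
  proof -
    have "c1 * (dist z p)^2 < c1 * r0^2" using lower[of z] that by (simp add: \<rho>_def)
    then have "(dist z p)^2 < r0^2" using c1 by simp
    then have dl: "dist z p < r0" using r0 by (simp add: power_less_imp_less_base)
    have "\<bar>fst (z - p)\<bar> \<le> dist z p" "\<bar>fst (snd (z - p))\<bar> \<le> dist z p" "\<bar>snd (snd (z - p))\<bar> \<le> dist z p"
      using norm3_comp[of "z - p"] by (simp_all add: dist_norm)
    then show ?thesis using dl by (simp add: p_def)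
  qed
  have dec: "DV z (f z) \<le> - \<kappa> * V z" if zr: "V z < \<rho>" for z
  proof -
    obtain x y v where z: "z = (x, y, v)" by (cases z) auto
    have reg: "\<bar>x - xs\<bar> < r0" "\<bar>y - ys\<bar> < r0" "\<bar>v - vs\<bar> < r0" using region[OF zr] by (auto simp: z)
    have v0: "0 \<le> v" using reg(3) r0 by (auto simp: R_def abs_less_iff)
    have hv: "0 \<le> H v" unfolding H_def using v0 a9 a10 a11 by (intro hh_nonneg) auto
    define G where "G = GG a9 a10 a11 n v vs"
    have hd: "H v - hs = G * (v - vs)" unfolding H_def hs_def G_def using v0 vs a11 by (intro hh_diff) auto
    have Eb: "\<bar>be * c - xs * G\<bar> \<le> m"
    proof -
      have "\<bar>be * c - xs * G\<bar> = xs * \<bar>G - Gs\<bar>" using xs by (simp add: bec abs_minus_commute right_diff_distrib[symmetric] abs_mult)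
      also have "\<dots> \<le> xs * (m / xs)" using r(2)[of v] reg(3) r0 xs by (intro mult_left_mono) (auto simp: G_def)
      also have "\<dots> = m" using xs by simp
      finally show ?thesis .
    qed
    define X where "X = x - xs"
    define W where "W = x + y - xs - ys"
    define Z where "Z = v - vs"
    have "DV z (f z) = 2 * (- ((a4 + k2) + H v) * (x - xs)^2 + K * (x - xs) * (x + y - xs - ys) - (al * a1) * (x + y - xs - ys)^2
        - (be * a6) * (v - vs)^2 + (be * c - xs * G) * (x - xs) * (v - vs))"
      unfolding DV_def DVf_def fcomp z p_def
      using DV_ident[OF e1 e2 e3 hd Kid, of x y be] by simp
    also have "\<dots> = 2 * (- (A0 + H v) * X^2 + K * X * W - (al * a1) * W^2 - (be * a6) * Z^2 + (be * c - xs * G) * X * Z)"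
      by (simp add: A0_def X_def W_def Z_def)
    also have "\<dots> \<le> 2 * (- (m / 2) * (X^2 + W^2 + Z^2))"
      by (rule mult_left_mono[OF quad_combine[OF m1(2)[rule_format, of X W] m Eb hv]]) simp
    also have "\<dots> = - m * (X^2 + W^2 + Z^2)" by simp
    also have "\<dots> \<le> - \<kappa> * V z"
    proof -
      have VV: "V z \<le> (1 + al + be) * (X^2 + W^2 + Z^2)"
        using V_upper3[OF al be, of X W Z] by (simp add: V_def Vf_def z p_def X_def W_def Z_def)
      have "\<kappa> * V z \<le> \<kappa> * ((1 + al + be) * (X^2 + W^2 + Z^2))" using VV kap by (intro mult_left_mono) auto
      also have "\<dots> = m * (X^2 + W^2 + Z^2)" using al be by (simp add: \<kappa>_def)
      finally show ?thesis by simp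
    qed
    finally show ?thesis .
  qed
  define g where "g = (\<lambda>z. f (proj3 p R z))"
  have gf: "g z = f z" if "V z < \<rho>" for z
  proof -
    have "proj3 p R z = z" using region[OF that] r0 by (intro proj3_id) (auto simp: p_def)
    then show ?thesis by (simp add: g_def)
  qed
  define Hm where "Hm = a9 * a10 / a11"
  define Xm where "Xm = xs + R"
  define Lh where "Lh = a9 * (a10 - a11) * (real n * (2 * vs) ^ (n - 1))"
  define C where "C = \<bar>a4 - a1\<bar> + a1 + k2 + a4 + c + a6 + Hm + Xm * Lh"
  have Hm: "0 \<le> Hm" and Xm: "0 \<le> Xm" and Lh: "0 \<le> Lh" using a9 a10 a11 xs R vs by (auto simp: Hm_def Xm_def Lh_def simp del: power_mult_distrib)
  have C: "0 \<le> C" using Hm Xm Lh a1 k2 a4 c a6 by (simp add: C_def)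
  have flip: "norm (f q1 - f q2) \<le> (9 * C) * norm (q1 - q2)"
    if q1: "\<bar>fst q1 - xs\<bar> \<le> R" "\<bar>fst (snd q1) - ys\<bar> \<le> R" "\<bar>snd (snd q1) - vs\<bar> \<le> R"
    and q2: "\<bar>fst q2 - xs\<bar> \<le> R" "\<bar>fst (snd q2) - ys\<bar> \<le> R" "\<bar>snd (snd q2) - vs\<bar> \<le> R" for q1 q2
  proof -
    obtain x1 y1 v1 where z1: "q1 = (x1, y1, v1)" by (cases q1) auto
    obtain x2 y2 v2 where z2: "q2 = (x2, y2, v2)" by (cases q2) auto
    have v1: "0 \<le> v1" "v1 \<le> 2 * vs" and v2: "0 \<le> v2" "v2 \<le> 2 * vs" and x2: "\<bar>x2\<bar> \<le> Xm"
    proof -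
      have b: "- R \<le> v1 - vs" "v1 - vs \<le> R" "- R \<le> v2 - vs" "v2 - vs \<le> R" "- R \<le> x2 - xs" "x2 - xs \<le> R"
        using q1 q2 unfolding z1 z2 abs_le_iff by auto
      have "R = vs / 2" by (simp add: R_def)
      then show "0 \<le> v1" "v1 \<le> 2 * vs" "0 \<le> v2" "v2 \<le> 2 * vs" "\<bar>x2\<bar> \<le> Xm"
        using b vs xs unfolding Xm_def abs_le_iff by linarith+
    qed
    have h1: "\<bar>H v1\<bar> \<le> Hm"
      using hh_le[OF v1(1) _ a11, of a9 a10 n] hh_nonneg[OF v1(1), of a9 a10 a11 n] a9 a10 a11
      by (simp add: H_def Hm_def)
    have hl: "\<bar>H v1 - H v2\<bar> \<le> Lh * \<bar>v1 - v2\<bar>"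
      unfolding H_def Lh_def using a9 a10 a11 by (intro hh_lip[OF v1(1,2) v2(1,2)]) auto
    have P: "\<bar>H v1 * x1 - H v2 * x2\<bar> \<le> Hm * \<bar>x1 - x2\<bar> + Xm * (Lh * \<bar>v1 - v2\<bar>)"
      by (rule prod_lip[OF h1 x2 hl])
    define S where "S = \<bar>x1 - x2\<bar> + \<bar>y1 - y2\<bar> + \<bar>v1 - v2\<bar>"
    have Sx: "C * \<bar>x1 - x2\<bar> + C * \<bar>y1 - y2\<bar> + C * \<bar>v1 - v2\<bar> = C * S" by (simp add: S_def algebra_simps)
    have cx: "(\<bar>a4 - a1\<bar>) * \<bar>y1 - y2\<bar> \<le> C * \<bar>y1 - y2\<bar>" "(a1 + k2 + Hm) * \<bar>x1 - x2\<bar> \<le> C * \<bar>x1 - x2\<bar>"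
      "Xm * Lh * \<bar>v1 - v2\<bar> \<le> C * \<bar>v1 - v2\<bar>" "(Hm) * \<bar>x1 - x2\<bar> \<le> C * \<bar>x1 - x2\<bar>"
      "a4 * \<bar>y1 - y2\<bar> \<le> C * \<bar>y1 - y2\<bar>" "c * \<bar>x1 - x2\<bar> \<le> C * \<bar>x1 - x2\<bar>" "a6 * \<bar>v1 - v2\<bar> \<le> C * \<bar>v1 - v2\<bar>"
      using Hm Xm Lh a1 k2 a4 c a6 by (auto intro!: mult_right_mono simp: C_def)
    have nn: "0 \<le> C * \<bar>x1 - x2\<bar>" "0 \<le> C * \<bar>y1 - y2\<bar>" "0 \<le> C * \<bar>v1 - v2\<bar>" using C by auto
    have d1: "\<bar>fst (f q1) - fst (f q2)\<bar> \<le> C * S"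
    proof -
      have "fst (f q1) - fst (f q2) = (a4 - a1) * (y1 - y2) - (a1 + k2) * (x1 - x2) - (H v1 * x1 - H v2 * x2)"
        by (simp add: fcomp z1 z2 algebra_simps)
      then have "\<bar>fst (f q1) - fst (f q2)\<bar> \<le> \<bar>a4 - a1\<bar> * \<bar>y1 - y2\<bar> + (a1 + k2) * \<bar>x1 - x2\<bar> + \<bar>H v1 * x1 - H v2 * x2\<bar>"
        using abs_triangle_ineq4[of "(a4 - a1) * (y1 - y2) - (a1 + k2) * (x1 - x2)" "H v1 * x1 - H v2 * x2"]
          abs_triangle_ineq4[of "(a4 - a1) * (y1 - y2)" "(a1 + k2) * (x1 - x2)"] a1 k2
        by (simp add: abs_mult)
      then show ?thesis using P cx Sx nn by (simp add: algebra_simps)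
    qed
    have d2: "\<bar>fst (snd (f q1)) - fst (snd (f q2))\<bar> \<le> C * S"
    proof -
      have "fst (snd (f q1)) - fst (snd (f q2)) = (H v1 * x1 - H v2 * x2) - a4 * (y1 - y2)"
        by (simp add: fcomp z1 z2 algebra_simps)
      then have "\<bar>fst (snd (f q1)) - fst (snd (f q2))\<bar> \<le> \<bar>H v1 * x1 - H v2 * x2\<bar> + a4 * \<bar>y1 - y2\<bar>"
        using abs_triangle_ineq4[of "H v1 * x1 - H v2 * x2" "a4 * (y1 - y2)"] a4 by (simp add: abs_mult)
      then show ?thesis using P cx Sx nn by (simp add: algebra_simps)
    qed
    have d3: "\<bar>snd (snd (f q1)) - snd (snd (f q2))\<bar> \<le> C * S"
    proof -
      have "snd (snd (f q1)) - snd (snd (f q2)) = c * (x1 - x2) - a6 * (v1 - v2)"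
        by (simp add: fcomp z1 z2 algebra_simps)
      then have "\<bar>snd (snd (f q1)) - snd (snd (f q2))\<bar> \<le> c * \<bar>x1 - x2\<bar> + a6 * \<bar>v1 - v2\<bar>"
        using abs_triangle_ineq4[of "c * (x1 - x2)" "a6 * (v1 - v2)"] c a6 by (simp add: abs_mult)
      then show ?thesis using cx Sx nn by (simp add: algebra_simps)
    qed
    show ?thesis by (rule lip3[OF C]) (use d1 d2 d3 in \<open>simp_all add: S_def z1 z2\<close>)
  qed
  have lip: "\<forall>a b. norm (g a - g b) \<le> (9 * C) * norm (a - b)"
  proof (intro allI)
    fix a b
    have "norm (g a - g b) \<le> (9 * C) * norm (proj3 p R a - proj3 p R b)"
      unfolding g_def using proj3_range[OF less_imp_le[OF R], of p a] proj3_range[OF less_imp_le[OF R], of p b]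
      by (intro flip) (auto simp: p_def)
    also have "\<dots> \<le> (9 * C) * norm (a - b)"
      using C R by (intro mult_left_mono proj3_lip) auto
    finally show "norm (g a - g b) \<le> (9 * C) * norm (a - b)" .
  qed
  have Vd: "(V has_derivative DV z) (at z)" for z unfolding V_def DV_def by (rule Vf_deriv)
  have "locally_asymptotically_stable f p"
    by (rule abstract_las[OF fp Vd Vnn lower upper c1 c2 rho kap dec lip _ gf]) (use C in auto)
  then show ?thesis by (simp add: f_def p_def)
qed


theorem mainTheorem6:
  fixes kON kOFF kI \<alpha>p1 \<alpha>p2 \<gamma>p1 \<gamma>m2 \<alpha>m2I \<beta>m2A Tc vb :: real
    and n :: nat and xs ys vs :: real
  assumes "kON > 0" "kOFF > 0" "kI > 0" "\<alpha>p1 > 0" "\<alpha>p2 > 0" "\<gamma>p1 > 0" "\<gamma>m2 > 0"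
    and "\<alpha>m2I > 0" "\<beta>m2A > 0" "Tc > 0" "vb > 1" "n \<ge> 1"
    and "xs > 0" "ys > 0" "vs > 0"
    and "hiv_field kON (kON + kOFF) kI \<alpha>p1 \<gamma>p1 \<alpha>m2I (\<gamma>m2 + \<alpha>p1 + \<alpha>p2) (\<beta>m2A / vb)
           (vb / Tc ^ n) (1 / Tc ^ n) n (xs, ys, vs) = (0, 0, 0)"
  shows "locally_asymptotically_stable
           (hiv_field kON (kON + kOFF) kI \<alpha>p1 \<gamma>p1 \<alpha>m2I (\<gamma>m2 + \<alpha>p1 + \<alpha>p2) (\<beta>m2A / vb)
              (vb / Tc ^ n) (1 / Tc ^ n) n) (xs, ys, vs)"
proof (rule hiv_main)
  have T: "0 < Tc ^ n" using assms(10) by simp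
  show "0 < \<alpha>p1 * (\<alpha>m2I / (\<gamma>m2 + \<alpha>p1 + \<alpha>p2))" using assms by simp
  show "0 < \<beta>m2A / vb" using assms by simp
  show "0 < 1 / Tc ^ n" using T by simp
  show "1 / Tc ^ n < vb / Tc ^ n" using T assms(11) by (simp add: divide_strict_right_mono)
qed (use assms in auto)

end
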